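(* Let $(G,c)$ be a W-state graph, let $X,X'$ be the vertex sets of the two connected components of $G_m=(V(G),E_m(G))$, and let $\{x,x'\}$ be a two-vertex cut of $G$ with $x\in X$ and $x'\in X'$. Let $C_1,\dots,C_t$ be the connected components of $G-\{x,x'\}$. Then each W-block $(H_i,c_i)$, $i\in\{1,\dots,t\}$, of $(G,c)$ with respect to $\{x,x'\}$ is a W-state graph.
   Context: Graphs may have parallel edges but no loops. A half-edge $2$-colouring $c$ of $G$ assigns to each pair $(e,w)$ with $w$ an endpoint of edge $e$ a colour in $\{0,1\}$ (0 = blue, 1 = red). An edge $e=uv$ is bichromatic if $c(e,u)\neq c(e,v)$ and monochromatic otherwise; $E_m(G)$ is the set of monochromatic edges; standing convention: monochromatic edges are blue at both ends. A graph is matching-covered if every edge lies in some perfect matching. A W-state graph is a half-edge $2$-coloured matching-covered graph $(G,c)$ in which every perfect matching contains exactly one bichromatic edge, and every vertex $v$ is incident with an edge $e$ with $c(e,v)=1$. For any W-state graph, $G_m$ has exactly two connected components. W-blocks: for each $i$, start from $H_i:=G[V(C_i)\cup\{x,x'\}]$ (induced subgraph, keeping all parallel edges) with colouring $c_i$ agreeing with $c$ on its edges, and modify as follows. (1) If $x$ is not incident in $H_i$ with an edge whose half at $x$ is red, add a new bichromatic edge between $x$ and $x'$ whose red half is at $x$; likewise, if $x'$ is not incident in $H_i$ with an edge whose half at $x'$ is red, add a new bichromatic edge between $x$ and $x'$ whose red half is at $x'$. (2) If after this $H_i$ still contains no bichromatic edge between $x$ and $x'$, add a new bichromatic edge between $x$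 and $x'$ (with the red half at either endpoint). The resulting $(H_i,c_i)$ are the W-blocks. *)

theory Defs
  imports Main
begin

text \<open>A finite multigraph (parallel edges allowed, no loops): vertex set V, edge set E of
  edge identifiers, and ends e = the two-element set of endpoints of edge e.
  A half-edge 2-colouring is c :: 'e => 'v => bool, where c e w is the colour of the half of e
  at its endpoint w; True = 1 = red, False = 0 = blue.\<close>

definition multigraph :: "'v set \<Rightarrow> 'e set \<Rightarrow> ('e \<Rightarrow> 'v set) \<Rightarrow> bool" where
  "multigraph V E ends \<longleftrightarrow> finite V \<and> finite E \<and>
     (\<forall>e\<in>E. ends e \<subseteq> V \<and> card (ends e) = 2)"

definition bichromatic :: "('e \<Rightarrow> 'v set) \<Rightarrow> ('e \<Rightarrow> 'v \<Rightarrow> bool) \<Rightarrow> 'e \<Rightarrow> bool" where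
  "bichromatic ends c e \<longleftrightarrow> (\<exists>u v. ends e = {u, v} \<and> c e u \<noteq> c e v)"

definition perfect_matching :: "'v set \<Rightarrow> 'e set \<Rightarrow> ('e \<Rightarrow> 'v set) \<Rightarrow> 'e set \<Rightarrow> bool" where
  "perfect_matching V E ends M \<longleftrightarrow> M \<subseteq> E \<and> (\<forall>v\<in>V. \<exists>!e. e \<in> M \<and> v \<in> ends e)"

definition matching_covered :: "'v set \<Rightarrow> 'e set \<Rightarrow> ('e \<Rightarrow> 'v set) \<Rightarrow> bool" where
  "matching_covered V E ends \<longleftrightarrow> multigraph V E ends \<and>
     (\<forall>e\<in>E. \<exists>M. perfect_matching V E ends M \<and> e \<in> M)"

text \<open>W-state graph. The standing convention (monochromatic edges are blue at both ends)
  is included as part of the notion of a half-edge 2-coloured graph.\<close>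
definition W_state :: "'v set \<Rightarrow> 'e set \<Rightarrow> ('e \<Rightarrow> 'v set) \<Rightarrow> ('e \<Rightarrow> 'v \<Rightarrow> bool) \<Rightarrow> bool" where
  "W_state V E ends c \<longleftrightarrow>
     matching_covered V E ends \<and>
     (\<forall>e\<in>E. \<not> bichromatic ends c e \<longrightarrow> (\<forall>w\<in>ends e. \<not> c e w)) \<and>
     (\<forall>M. perfect_matching V E ends M \<longrightarrow> card {e \<in> M. bichromatic ends c e} = 1) \<and>
     (\<forall>v\<in>V. \<exists>e\<in>E. v \<in> ends e \<and> c e v)"

definition reach :: "'v set \<Rightarrow> 'e set \<Rightarrow> ('e \<Rightarrow> 'v set) \<Rightarrow> 'v \<Rightarrow> 'v \<Rightarrow> bool" where
  "reach W F ends = (\<lambda>u v. u \<in> W \<and> v \<in> W \<and> (\<exists>e\<in>F. ends e = {u, v}))\<^sup>*\<^sup>*"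

definition component :: "'v set \<Rightarrow> 'e set \<Rightarrow> ('e \<Rightarrow> 'v set) \<Rightarrow> 'v set \<Rightarrow> bool" where
  "component W F ends K \<longleftrightarrow> (\<exists>u\<in>W. K = {v \<in> W. reach W F ends u v})"

definition mono_edges :: "'e set \<Rightarrow> ('e \<Rightarrow> 'v set) \<Rightarrow> ('e \<Rightarrow> 'v \<Rightarrow> bool) \<Rightarrow> 'e set" where
  "mono_edges E ends c = {e \<in> E. \<not> bichromatic ends c e}"

definition del_verts_E :: "'e set \<Rightarrow> ('e \<Rightarrow> 'v set) \<Rightarrow> 'v set \<Rightarrow> 'e set" where
  "del_verts_E E ends S = {e \<in> E. ends e \<inter> S = {}}"

definition two_vertex_cut :: "'v set \<Rightarrow> 'e set \<Rightarrow> ('e \<Rightarrow> 'v set) \<Rightarrow> 'v \<Rightarrow> 'v \<Rightarrow> bool" where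
  "two_vertex_cut V E ends x x' \<longleftrightarrow> x \<in> V \<and> x' \<in> V \<and> x \<noteq> x' \<and>
     (\<exists>u\<in>V - {x, x'}. \<exists>w\<in>V - {x, x'}.
        \<not> reach (V - {x, x'}) (del_verts_E E ends {x, x'}) ends u w)"

text \<open>Edges of the block have type 'e + nat: Inl e are the edges of the induced subgraph,
  Inr 0, Inr 1, Inr 2 are the possibly added new x x' edges of steps (1) and (2).
  The flag r selects the endpoint of the red half of the edge added in step (2):
  r = True means red at x, r = False means red at x'.\<close>

definition wblock_V :: "'v set \<Rightarrow> 'v \<Rightarrow> 'v \<Rightarrow> 'v set" where
  "wblock_V C x x' = C \<union> {x, x'}"

definition wblock_ends :: "('e \<Rightarrow> 'v set) \<Rightarrow> 'v \<Rightarrow> 'v \<Rightarrow> 'e + nat \<Rightarrow> 'v set" where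
  "wblock_ends ends x x' f = (case f of Inl e \<Rightarrow> ends e | Inr _ \<Rightarrow> {x, x'})"

definition wblock_col :: "('e \<Rightarrow> 'v \<Rightarrow> bool) \<Rightarrow> 'v \<Rightarrow> 'v \<Rightarrow> bool \<Rightarrow> 'e + nat \<Rightarrow> 'v \<Rightarrow> bool" where
  "wblock_col c x x' r f w = (case f of
      Inl e \<Rightarrow> c e w
    | Inr n \<Rightarrow> (if n = 0 then w = x else if n = 1 then w = x'
               else (if r then w = x else w = x')))"

definition wblock_E0 :: "'e set \<Rightarrow> ('e \<Rightarrow> 'v set) \<Rightarrow> 'v set \<Rightarrow> 'v \<Rightarrow> 'v \<Rightarrow> ('e + nat) set" where
  "wblock_E0 E ends C x x' = Inl ` {e \<in> E. ends e \<subseteq> wblock_V C x x'}"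

definition wblock_E1 :: "'e set \<Rightarrow> ('e \<Rightarrow> 'v set) \<Rightarrow> ('e \<Rightarrow> 'v \<Rightarrow> bool) \<Rightarrow> 'v set \<Rightarrow> 'v \<Rightarrow> 'v
    \<Rightarrow> ('e + nat) set" where
  "wblock_E1 E ends c C x x' =
     (let E0 = wblock_E0 E ends C x x';
          ends' = wblock_ends ends x x'; c' = wblock_col c x x' True;
          redx = (\<exists>f\<in>E0. x \<in> ends' f \<and> c' f x);
          redx' = (\<exists>f\<in>E0. x' \<in> ends' f \<and> c' f x')
      in E0 \<union> (if redx then {} else {Inr 0}) \<union> (if redx' then {} else {Inr 1}))"

definition wblock_E :: "'e set \<Rightarrow> ('e \<Rightarrow> 'v set) \<Rightarrow> ('e \<Rightarrow> 'v \<Rightarrow> bool) \<Rightarrow> 'v set \<Rightarrow> 'v \<Rightarrow> 'v \<Rightarrow> bool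
    \<Rightarrow> ('e + nat) set" where
  "wblock_E E ends c C x x' r =
     (let E1 = wblock_E1 E ends c C x x';
          ends' = wblock_ends ends x x'; c' = wblock_col c x x' r
      in E1 \<union> (if (\<exists>f\<in>E1. ends' f = {x, x'} \<and> bichromatic ends' c' f) then {} else {Inr 2}))"

end

theory Submission
  imports Defs
begin

definition pmg :: "('e \<Rightarrow> 'v set) \<Rightarrow> 'v set \<Rightarrow> 'e set \<Rightarrow> bool" where
  "pmg ends W M \<longleftrightarrow> (\<forall>e\<in>M. ends e \<subseteq> W) \<and> (\<forall>v\<in>W. \<exists>!e. e \<in> M \<and> v \<in> ends e)"

lemma pmgD1: "pmg ends W M \<Longrightarrow> e \<in> M \<Longrightarrow> ends e \<subseteq> W"
  unfolding pmg_def by blast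

lemma pmgD2: "pmg ends W M \<Longrightarrow> v \<in> W \<Longrightarrow> \<exists>e\<in>M. v \<in> ends e"
  unfolding pmg_def by metis

lemma pmg_disj:
  assumes "pmg ends W M" "e1 \<in> M" "e2 \<in> M" "v \<in> ends e1" "v \<in> ends e2"
  shows "e1 = e2"
proof -
  have "v \<in> W" using pmgD1[OF assms(1,2)] assms(4) by blast
  then have "\<exists>!e. e \<in> M \<and> v \<in> ends e" using assms(1) unfolding pmg_def by blast
  then show ?thesis using assms(2-5) by blast
qed

lemma pmgI:
  assumes "\<And>e. e \<in> M \<Longrightarrow> ends e \<subseteq> W"
    and "\<And>v. v \<in> W \<Longrightarrow> \<exists>e\<in>M. v \<in> ends e"
    and "\<And>e1 e2 v. e1 \<in> M \<Longrightarrow> e2 \<in> M \<Longrightarrow> v \<in> ends e1 \<Longrightarrow> v \<in> ends e2 \<Longrightarrow> e1 = e2"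
  shows "pmg ends W M"
  unfolding pmg_def
proof (intro conjI ballI)
  fix v assume "v \<in> W"
  then obtain e where "e \<in> M" "v \<in> ends e" using assms(2) by blast
  then show "\<exists>!e. e \<in> M \<and> v \<in> ends e" using assms(3) by blast
qed (use assms(1) in blast)

lemma pmg_Union:
  assumes "pmg ends W M" shows "\<Union>(ends ` M) = W"
  using pmgD1[OF assms] pmgD2[OF assms] by blast

lemma pmg_union:
  assumes "pmg ends W1 M1" "pmg ends W2 M2" "W1 \<inter> W2 = {}"
  shows "pmg ends (W1 \<union> W2) (M1 \<union> M2)"
proof (rule pmgI)
  fix e assume "e \<in> M1 \<union> M2" then show "ends e \<subseteq> W1 \<union> W2"
    using pmgD1[OF assms(1)] pmgD1[OF assms(2)] by blast
next
  fix v assume "v \<in> W1 \<union> W2" then show "\<exists>e\<in>M1 \<union> M2. v \<in> ends e"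
    using pmgD2[OF assms(1)] pmgD2[OF assms(2)] by blast
next
  fix e1 e2 v assume h: "e1 \<in> M1 \<union> M2" "e2 \<in> M1 \<union> M2" "v \<in> ends e1" "v \<in> ends e2"
  have a: "e \<in> M1 \<Longrightarrow> v \<in> ends e \<Longrightarrow> v \<in> W1" for e using pmgD1[OF assms(1)] by blast
  have b: "e \<in> M2 \<Longrightarrow> v \<in> ends e \<Longrightarrow> v \<in> W2" for e using pmgD1[OF assms(2)] by blast
  show "e1 = e2"
  proof (cases "e1 \<in> M1")
    case True
    then have "v \<in> W1" using a h by blast
    then have "e2 \<notin> M2" using b h assms(3) by blast
    then show ?thesis using pmg_disj[OF assms(1) True _ h(3,4)] h(2) by blast
  next
    case False
    then have "e1 \<in> M2" using h by blast
    then have "v \<in> W2" using b h by blast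
    then have "e2 \<notin> M1" using a h assms(3) by blast
    then show ?thesis using pmg_disj[OF assms(2) \<open>e1 \<in> M2\<close> _ h(3,4)] h(2) by blast
  qed
qed

lemma pmg_sub1:
  assumes "pmg ends W M" "M' \<subseteq> M"
  shows "pmg ends (\<Union>(ends ` M')) M'"
proof (rule pmgI)
  fix e1 e2 v assume "e1 \<in> M'" "e2 \<in> M'" "v \<in> ends e1" "v \<in> ends e2"
  then show "e1 = e2" using pmg_disj[OF assms(1)] assms(2) by blast
qed blast+

lemma pmg_sub2:
  assumes "pmg ends W M" "M' \<subseteq> M"
  shows "pmg ends (W - \<Union>(ends ` M')) (M - M')"
proof (rule pmgI)
  fix e assume e: "e \<in> M - M'"
  have "ends e \<subseteq> W" using e pmgD1[OF assms(1)] by blast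
  moreover have "ends e \<inter> \<Union>(ends ` M') = {}"
  proof (rule ccontr)
    assume "ends e \<inter> \<Union>(ends ` M') \<noteq> {}"
    then obtain v e' where "v \<in> ends e" "e' \<in> M'" "v \<in> ends e'" by blast
    then have "e = e'" using pmg_disj[OF assms(1), of e e' v] e assms(2) by blast
    then show False using e \<open>e' \<in> M'\<close> by blast
  qed
  ultimately show "ends e \<subseteq> W - \<Union>(ends ` M')" by blast
next
  fix v assume v: "v \<in> W - \<Union>(ends ` M')"
  then obtain e where e: "e \<in> M" "v \<in> ends e" using pmgD2[OF assms(1)] by blast
  have "e \<notin> M'" using e v by blast
  then show "\<exists>e\<in>M - M'. v \<in> ends e" using e by blast
next
  fix e1 e2 v assume "e1 \<in> M - M'" "e2 \<in> M - M'" "v \<in> ends e1" "v \<in> ends e2"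
  then show "e1 = e2" using pmg_disj[OF assms(1)] by blast
qed

lemma pmg_restrict:
  assumes "pmg ends W M" "A \<subseteq> W" "\<And>e. e \<in> M \<Longrightarrow> A \<inter> ends e \<noteq> {} \<Longrightarrow> ends e \<subseteq> A"
  shows "pmg ends A {e\<in>M. A \<inter> ends e \<noteq> {}}"
proof (rule pmgI)
  fix v assume v: "v \<in> A"
  then obtain e where e: "e \<in> M" "v \<in> ends e" using pmgD2[OF assms(1)] assms(2) by blast
  then show "\<exists>e\<in>{e\<in>M. A \<inter> ends e \<noteq> {}}. v \<in> ends e" using v by blast
next
  fix e1 e2 v assume "e1 \<in> {e\<in>M. A \<inter> ends e \<noteq> {}}" "e2 \<in> {e\<in>M. A \<inter> ends e \<noteq> {}}"
     "v \<in> ends e1" "v \<in> ends e2"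
  then show "e1 = e2" using pmg_disj[OF assms(1)] by blast
qed (use assms(3) in blast)

lemma pmg_single: "pmg ends (ends k) {k}"
  by (rule pmgI) auto

lemma pmg_card:
  assumes "pmg ends W M" "finite M" "\<And>e. e \<in> M \<Longrightarrow> finite (ends e)"
  shows "card (Y \<inter> W) = (\<Sum>e\<in>M. card (Y \<inter> ends e))"
proof -
  have "Y \<inter> W = (\<Union>e\<in>M. Y \<inter> ends e)" using pmg_Union[OF assms(1)] by blast
  moreover have "card (\<Union>e\<in>M. Y \<inter> ends e) = (\<Sum>e\<in>M. card (Y \<inter> ends e))"
  proof (rule card_UN_disjoint)
    show "finite M" by fact
    show "\<forall>i\<in>M. finite (Y \<inter> ends i)" using assms(3) by blast
    show "\<forall>i\<in>M. \<forall>j\<in>M. i \<noteq> j \<longrightarrow> Y \<inter> ends i \<inter> (Y \<inter> ends j) = {}"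
      using pmg_disj[OF assms(1)] by blast
  qed
  ultimately show ?thesis by simp
qed

lemma pmg_inj_image:
  assumes "inj g"
  shows "pmg f W (g ` Q) \<longleftrightarrow> pmg (f \<circ> g) W Q"
proof
  assume h: "pmg f W (g ` Q)"
  show "pmg (f \<circ> g) W Q"
  proof (rule pmgI)
    fix e assume "e \<in> Q" then show "(f \<circ> g) e \<subseteq> W" using pmgD1[OF h, of "g e"] by simp
  next
    fix v assume "v \<in> W" then obtain k where "k \<in> g ` Q" "v \<in> f k" using pmgD2[OF h] by blast
    then show "\<exists>e\<in>Q. v \<in> (f \<circ> g) e" by auto
  next
    fix e1 e2 v assume "e1 \<in> Q" "e2 \<in> Q" "v \<in> (f \<circ> g) e1" "v \<in> (f \<circ> g) e2"
    then have "g e1 = g e2" using pmg_disj[OF h, of "g e1" "g e2" v] by simp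
    then show "e1 = e2" using assms by (simp add: inj_eq)
  qed
next
  assume h: "pmg (f \<circ> g) W Q"
  show "pmg f W (g ` Q)"
  proof (rule pmgI)
    fix k assume "k \<in> g ` Q" then show "f k \<subseteq> W" using pmgD1[OF h] by auto
  next
    fix v assume "v \<in> W" then obtain e where "e \<in> Q" "v \<in> (f \<circ> g) e" using pmgD2[OF h] by blast
    then show "\<exists>k\<in>g ` Q. v \<in> f k" by auto
  next
    fix k1 k2 v assume a: "k1 \<in> g ` Q" "k2 \<in> g ` Q" "v \<in> f k1" "v \<in> f k2"
    then obtain e1 e2 where "e1 \<in> Q" "e2 \<in> Q" "k1 = g e1" "k2 = g e2" by blast
    then show "k1 = k2" using pmg_disj[OF h, of e1 e2 v] a by simp
  qed
qed

lemma reach_sym: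
  assumes "reach W F ends u v" shows "reach W F ends v u"
  using assms unfolding reach_def
proof (induction rule: rtranclp_induct)
  case base then show ?case by simp
next
  case (step y z)
  from step(2) obtain e where "y \<in> W" "z \<in> W" "e \<in> F" "ends e = {y, z}" by blast
  then have "(\<lambda>u v. u \<in> W \<and> v \<in> W \<and> (\<exists>e\<in>F. ends e = {u, v})) z y"
    by (metis insert_commute)
  then show ?case using step(3) by (rule converse_rtranclp_into_rtranclp)
qed

lemma reach_trans:
  "reach W F ends u v \<Longrightarrow> reach W F ends v w \<Longrightarrow> reach W F ends u w"
  unfolding reach_def by (rule rtranclp_trans)

lemma comp_sub: "component W F ends K \<Longrightarrow> K \<subseteq> W"
  unfolding component_def by blast

lemma comp_eq:
  assumes "component W F ends K" "v \<in> K"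
  shows "K = {w\<in>W. reach W F ends v w}"
proof -
  obtain u where u: "u \<in> W" "K = {w\<in>W. reach W F ends u w}"
    using assms(1) unfolding component_def by blast
  have uv: "reach W F ends u v" using u assms(2) by blast
  have vu: "reach W F ends v u" using reach_sym[OF uv] .
  show ?thesis
  proof (intro set_eqI iffI)
    fix w assume "w \<in> K"
    then have "w \<in> W" "reach W F ends u w" using u by auto
    then show "w \<in> {w\<in>W. reach W F ends v w}" using reach_trans[OF vu] by blast
  next
    fix w assume "w \<in> {w\<in>W. reach W F ends v w}"
    then have "w \<in> W" "reach W F ends v w" by auto
    then show "w \<in> K" using reach_trans[OF uv] u by blast
  qed
qed

lemma comp_mem:
  assumes "component W F ends K" "u \<in> K" "v \<in> K"
  shows "reach W F ends u v"
  using comp_eq[OF assms(1,2)] assms(3) by blast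

lemma comp_closed:
  assumes "component W F ends K" "u \<in> K" "e \<in> F" "ends e = {u, v}" "v \<in> W"
  shows "v \<in> K"
proof -
  have "u \<in> W" using comp_sub[OF assms(1)] assms(2) by blast
  then have "reach W F ends u v" unfolding reach_def
    using assms(3,4,5) by (intro r_into_rtranclp) blast
  then show ?thesis using comp_eq[OF assms(1,2)] assms(5) by blast
qed

locale WS =
  fixes V :: "'v set" and E :: "'e set" and ends :: "'e \<Rightarrow> 'v set"
    and c :: "'e \<Rightarrow> 'v \<Rightarrow> bool" and X X' C :: "'v set" and x x' :: 'v
  assumes W: "W_state V E ends c"
    and cX: "component V (mono_edges E ends c) ends X"
    and cX': "component V (mono_edges E ends c) ends X'"
    and XX': "X \<noteq> X'"
    and cut: "two_vertex_cut V E ends x x'"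
    and xX: "x \<in> X" and xX': "x' \<in> X'"
    and cC: "component (V - {x, x'}) (del_verts_E E ends {x, x'}) ends C"
begin

abbreviation bic where "bic e \<equiv> bichromatic ends c e"
abbreviation PM where "PM M \<equiv> perfect_matching V E ends M"

lemma mg: "multigraph V E ends"
  using W unfolding W_state_def matching_covered_def by blast

lemma finV: "finite V" and finE: "finite E"
  using mg unfolding multigraph_def by auto

lemma ends_sub: "e \<in> E \<Longrightarrow> ends e \<subseteq> V"
  using mg unfolding multigraph_def by auto

lemma ends2: "e \<in> E \<Longrightarrow> card (ends e) = 2"
  using mg unfolding multigraph_def by auto

lemma ends_fin: "e \<in> E \<Longrightarrow> finite (ends e)"
  using ends2 by (metis card.infinite zero_neq_numeral)

lemma ends_pair: assumes "e \<in> E" "u \<in> ends e" obtains v where "ends e = {u, v}" "u \<noteq> v"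
proof -
  obtain a b where ab: "ends e = {a, b}" "a \<noteq> b" using ends2[OF assms(1)] card_2_iff by metis
  show ?thesis
  proof (cases "u = a")
    case True then show ?thesis using that ab by blast
  next
    case False then have "u = b" using ab assms(2) by blast
    then show ?thesis using that[of a] ab by (simp add: insert_commute)
  qed
qed

lemma PM_iff: "PM M \<longleftrightarrow> M \<subseteq> E \<and> pmg ends V M"
proof
  assume h: "PM M"
  then have "M \<subseteq> E" unfolding perfect_matching_def by blast
  moreover have "pmg ends V M" unfolding pmg_def
    using h ends_sub calculation unfolding perfect_matching_def by blast
  ultimately show "M \<subseteq> E \<and> pmg ends V M" by blast
next
  assume "M \<subseteq> E \<and> pmg ends V M"
  then show "PM M" unfolding perfect_matching_def pmg_def by blast
qed

lemma PM_one: "PM M \<Longrightarrow> card {e\<in>M. bic e} = 1"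
  using W unfolding W_state_def by blast

lemma PM_fin: "PM M \<Longrightarrow> finite M"
  using PM_iff finE finite_subset by blast

lemma mc: "e \<in> E \<Longrightarrow> \<exists>M. PM M \<and> e \<in> M"
  using W unfolding W_state_def matching_covered_def by blast

lemma mono_conv: "e \<in> E \<Longrightarrow> \<not> bic e \<Longrightarrow> w \<in> ends e \<Longrightarrow> \<not> c e w"
  using W unfolding W_state_def by blast

lemma red: "v \<in> V \<Longrightarrow> \<exists>e\<in>E. v \<in> ends e \<and> c e v"
  using W unfolding W_state_def by blast

lemma red_bic: "e \<in> E \<Longrightarrow> v \<in> ends e \<Longrightarrow> c e v \<Longrightarrow> bic e"
  using mono_conv by blast

lemma PM_bic_unique:
  assumes "PM M" "f \<in> M" "bic f"
  shows "{e\<in>M. bic e} = {f}"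
proof -
  have "card {e\<in>M. bic e} = 1" using PM_one[OF assms(1)] .
  then obtain g where g: "{e\<in>M. bic e} = {g}" using card_1_singletonE by blast
  then have "f = g" using assms by blast
  then show ?thesis using g by simp
qed

lemma XX'_disj: "X \<inter> X' = {}"
proof (rule ccontr)
  assume "X \<inter> X' \<noteq> {}"
  then obtain v where "v \<in> X" "v \<in> X'" by blast
  then show False using comp_eq[OF cX] comp_eq[OF cX'] XX' by metis
qed

lemma x'X: "x' \<notin> X" using XX'_disj xX' by blast

lemma XV: "X \<subseteq> V" using comp_sub[OF cX] .

lemma xV: "x \<in> V" and x'V: "x' \<in> V" and xx': "x \<noteq> x'"
  using cut unfolding two_vertex_cut_def by auto

lemma mono_X:
  assumes "e \<in> E" "\<not> bic e"
  shows "ends e \<subseteq> X \<or> X \<inter> ends e = {}"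
proof (rule ccontr)
  assume h: "\<not> (ends e \<subseteq> X \<or> X \<inter> ends e = {})"
  then obtain u where u: "u \<in> X" "u \<in> ends e" by blast
  obtain v where v: "ends e = {u, v}" "u \<noteq> v" using ends_pair[OF assms(1) u(2)] by blast
  have em: "e \<in> mono_edges E ends c" unfolding mono_edges_def using assms by blast
  have "v \<in> V" using ends_sub[OF assms(1)] v by blast
  then have "v \<in> X" using comp_closed[OF cX u(1) em v(1)] by blast
  then show False using h u v by auto
qed

lemma mono_even: "e \<in> E \<Longrightarrow> \<not> bic e \<Longrightarrow> even (card (X \<inter> ends e))"
  using mono_X[of e] ends2[of e] by (metis Int_absorb1 card.empty even_numeral even_zero inf_commute)

lemma PM_parity:
  assumes "PM M" "b \<in> M" "bic b"
  shows "even (card X + card (X \<inter> ends b))"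
proof -
  have M: "M \<subseteq> E" "pmg ends V M" using PM_iff assms(1) by auto
  have fin: "finite M" using PM_fin[OF assms(1)] .
  have "card (X \<inter> V) = (\<Sum>e\<in>M. card (X \<inter> ends e))"
    using pmg_card[OF M(2) fin] ends_fin M(1) by blast
  also have "\<dots> = card (X \<inter> ends b) + (\<Sum>e\<in>M - {b}. card (X \<inter> ends e))"
    using fin assms(2) by (simp add: sum.remove)
  finally have eq: "card X = card (X \<inter> ends b) + (\<Sum>e\<in>M - {b}. card (X \<inter> ends e))"
    using XV by (simp add: Int_absorb2)
  have "even (\<Sum>e\<in>M - {b}. card (X \<inter> ends e))"
  proof (rule dvd_sum)
    fix e assume e: "e \<in> M - {b}"
    have "\<not> bic e" using PM_bic_unique[OF assms] e by blast
    then show "even (card (X \<inter> ends e))" using mono_even M(1) e by blast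
  qed
  then show ?thesis using eq by simp
qed

end

context WS
begin

lemma X_odd: "odd (card X)"
proof (rule ccontr)
  assume ev: "\<not> odd (card X)"
  have allE: "ends e \<subseteq> X \<or> X \<inter> ends e = {}" if e: "e \<in> E" for e
  proof (cases "bic e")
    case True
    obtain M where M: "PM M" "e \<in> M" using mc[OF e] by blast
    have "even (card (X \<inter> ends e))" using PM_parity[OF M True] ev by simp
    moreover have "card (X \<inter> ends e) \<le> 2"
      using card_mono[OF ends_fin[OF e], of "X \<inter> ends e"] ends2[OF e] by simp
    ultimately have "card (X \<inter> ends e) = 0 \<or> card (X \<inter> ends e) = 2"
      by (metis dvd_refl even_Suc le_Suc_eq le_zero_eq numeral_2_eq_2 odd_one)
    then show ?thesis
    proof
      assume "card (X \<inter> ends e) = 0" then show ?thesis using ends_fin[OF e] by simp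
    next
      assume "card (X \<inter> ends e) = 2"
      then have "X \<inter> ends e = ends e"
        using card_subset_eq[OF ends_fin[OF e], of "X \<inter> ends e"] ends2[OF e] by simp
      then show ?thesis by blast
    qed
  next
    case False then show ?thesis using mono_X[OF e] by blast
  qed
  obtain f where f: "f \<in> E" "x \<in> ends f" "c f x" using red[OF xV] by blast
  obtain g where g: "g \<in> E" "x' \<in> ends g" "c g x'" using red[OF x'V] by blast
  have bf: "bic f" using red_bic f by blast
  have bg: "bic g" using red_bic g by blast
  have fX: "ends f \<subseteq> X" using allE[OF f(1)] f(2) xX by blast
  have gX: "X \<inter> ends g = {}" using allE[OF g(1)] g(2) x'X by blast
  obtain N where N: "PM N" "f \<in> N" using mc[OF f(1)] by blast
  obtain N' where N': "PM N'" "g \<in> N'" using mc[OF g(1)] by blast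
  have N1: "N \<subseteq> E" "pmg ends V N" using N PM_iff by auto
  have N1': "N' \<subseteq> E" "pmg ends V N'" using N' PM_iff by auto
  define M1 where "M1 = {e\<in>N. X \<inter> ends e \<noteq> {}}"
  define M2 where "M2 = {e\<in>N'. (V - X) \<inter> ends e \<noteq> {}}"
  have p1: "pmg ends X M1" unfolding M1_def
    by (rule pmg_restrict[OF N1(2) XV]) (use allE N1(1) in blast)
  have p2: "pmg ends (V - X) M2" unfolding M2_def
  proof (rule pmg_restrict[OF N1'(2)])
    fix e assume "e \<in> N'" "(V - X) \<inter> ends e \<noteq> {}"
    then show "ends e \<subseteq> V - X" using allE[of e] N1'(1) ends_sub[of e] by blast
  qed blast
  have "pmg ends (X \<union> (V - X)) (M1 \<union> M2)" by (rule pmg_union[OF p1 p2]) blast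
  moreover have "X \<union> (V - X) = V" using XV by blast
  moreover have "M1 \<union> M2 \<subseteq> E" using N1(1) N1'(1) unfolding M1_def M2_def by blast
  ultimately have PMM: "PM (M1 \<union> M2)" using PM_iff by simp
  have "f \<in> M1" unfolding M1_def using N(2) f(2) xX by blast
  moreover have "g \<in> M2" unfolding M2_def using N'(2) g(2) x'V x'X by blast
  moreover have "f \<noteq> g" using f(2) xX gX by blast
  ultimately have "{f, g} \<subseteq> {e\<in>M1 \<union> M2. bic e}" "card {f, g} = 2" using bf bg by auto
  moreover have "finite {e\<in>M1 \<union> M2. bic e}" using PM_fin[OF PMM] by simp
  ultimately have "card {e\<in>M1 \<union> M2. bic e} \<ge> 2" by (metis card_mono)
  then show False using PM_one[OF PMM] by simp
qed

lemma bic_X: assumes "e \<in> E" "bic e" shows "card (X \<inter> ends e) = 1"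
proof -
  obtain M where M: "PM M" "e \<in> M" using mc[OF assms(1)] by blast
  have "odd (card (X \<inter> ends e))" using PM_parity[OF M assms(2)] X_odd by simp
  moreover have "card (X \<inter> ends e) \<le> 2"
    using card_mono[OF ends_fin[OF assms(1)], of "X \<inter> ends e"] ends2[OF assms(1)] by simp
  ultimately show ?thesis by presburger
qed

lemma edge_par: "e \<in> E \<Longrightarrow> even (card (X \<inter> ends e) + (if bic e then 1 else 0))"
  using bic_X mono_even by auto

lemma match_par:
  assumes "P \<subseteq> E" "pmg ends U P"
  shows "even (card (X \<inter> U) + card {e\<in>P. bic e})"
proof -
  have fin: "finite P" using assms(1) finE finite_subset by blast
  have "card (X \<inter> U) = (\<Sum>e\<in>P. card (X \<inter> ends e))"
    using pmg_card[OF assms(2) fin] ends_fin assms(1) by blast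
  moreover have "card {e\<in>P. bic e} = (\<Sum>e\<in>P. (if bic e then 1 else 0))"
    using fin by (simp add: sum.If_cases Int_def)
  ultimately have "card (X \<inter> U) + card {e\<in>P. bic e}
      = (\<Sum>e\<in>P. card (X \<inter> ends e) + (if bic e then 1 else 0))"
    by (simp add: sum.distrib)
  moreover have "even (\<Sum>e\<in>P. card (X \<inter> ends e) + (if bic e then (1::nat) else 0))"
    by (rule dvd_sum) (use edge_par assms(1) in blast)
  ultimately show ?thesis by simp
qed

end

context WS
begin

lemma C_sub: "C \<subseteq> V - {x, x'}" using comp_sub[OF cC] .

lemma C_fin: "finite C" using C_sub finV finite_subset by blast

lemma C_closed:
  assumes "e \<in> E" "u \<in> C" "u \<in> ends e"
  shows "ends e \<subseteq> C \<union> {x, x'}"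
proof
  fix w assume w: "w \<in> ends e"
  obtain v where v: "ends e = {u, v}" "u \<noteq> v" using ends_pair[OF assms(1,3)] by blast
  show "w \<in> C \<union> {x, x'}"
  proof (cases "w = u")
    case True then show ?thesis using assms(2) by blast
  next
    case False
    then have wv: "w = v" using w v by blast
    show ?thesis
    proof (cases "v \<in> {x, x'}")
      case True then show ?thesis using wv by blast
    next
      case False
      have "u \<notin> {x, x'}" using assms(2) C_sub by blast
      then have "e \<in> del_verts_E E ends {x, x'}"
        unfolding del_verts_E_def using assms(1) v False by auto
      moreover have "v \<in> V - {x, x'}" using False ends_sub[OF assms(1)] v by blast
      ultimately have "v \<in> C" using comp_closed[OF cC assms(2) _ v(1)] by blast
      then show ?thesis using wv by blast
    qed
  qed
qed

lemma other_vertex: "\<exists>v. v \<in> V \<and> v \<notin> {x, x'} \<and> v \<notin> C"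
proof -
  obtain u w where uw: "u \<in> V - {x, x'}" "w \<in> V - {x, x'}"
    "\<not> reach (V - {x, x'}) (del_verts_E E ends {x, x'}) ends u w"
    using cut unfolding two_vertex_cut_def by blast
  have "\<not> (u \<in> C \<and> w \<in> C)" using comp_mem[OF cC] uw(3) by blast
  then show ?thesis using uw by blast
qed

definition MC where "MC M = {e\<in>M. C \<inter> ends e \<noteq> {}}"
definition U where "U M = \<Union>(ends ` MC M)"

lemma PMD: assumes "PM M" shows "M \<subseteq> E" "pmg ends V M"
  using assms PM_iff by auto

lemma MC_sub: "MC M \<subseteq> M" unfolding MC_def by blast

lemma pmg_MC: "PM M \<Longrightarrow> pmg ends (U M) (MC M)"
  unfolding U_def by (rule pmg_sub1[OF PMD(2) MC_sub])

lemma pmg_rest: "PM M \<Longrightarrow> pmg ends (V - U M) (M - MC M)"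
  unfolding U_def by (rule pmg_sub2[OF PMD(2) MC_sub])

lemma C_U: assumes "PM M" shows "C \<subseteq> U M"
proof
  fix v assume v: "v \<in> C"
  then have "v \<in> V" using C_sub by blast
  then obtain e where "e \<in> M" "v \<in> ends e" using pmgD2[OF PMD(2)[OF assms]] by blast
  then show "v \<in> U M" unfolding U_def MC_def using v by blast
qed

lemma U_CS: assumes "PM M" shows "U M \<subseteq> C \<union> {x, x'}"
proof
  fix v assume "v \<in> U M"
  then obtain e u where "e \<in> M" "u \<in> C" "u \<in> ends e" "v \<in> ends e"
    unfolding U_def MC_def by blast
  moreover then have "e \<in> E" using PMD(1)[OF assms] by blast
  ultimately show "v \<in> C \<union> {x, x'}" using C_closed by blast
qed

lemma U_decomp: "PM M \<Longrightarrow> U M = C \<union> ({x, x'} \<inter> U M)"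
  using C_U U_CS by blast

lemma MC_E: "PM M \<Longrightarrow> MC M \<subseteq> E" using MC_sub PMD(1) by blast

lemma U_even: assumes "PM M" shows "even (card (U M))"
proof -
  have MCE: "MC M \<subseteq> E" using MC_E[OF assms] .
  have fin: "finite (MC M)" using MCE finE finite_subset by blast
  have "card (UNIV \<inter> U M) = (\<Sum>e\<in>MC M. card (UNIV \<inter> ends e))"
    by (rule pmg_card[OF pmg_MC[OF assms] fin]) (use ends_fin MCE in blast)
  also have "\<dots> = (\<Sum>e\<in>MC M. 2)" using ends2 MCE by (intro sum.cong) auto
  finally have "card (U M) = 2 * card (MC M)" by simp
  then show ?thesis by simp
qed

lemma card_XU: assumes "PM M"
  shows "card (X \<inter> U M) = card (X \<inter> C) + (if x \<in> U M then 1 else 0)"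
proof -
  have xC: "x \<notin> C" using C_sub by blast
  have fin: "finite (X \<inter> C)" using C_fin by simp
  have "X \<inter> U M = (if x \<in> U M then insert x (X \<inter> C) else X \<inter> C)"
    using U_decomp[OF assms] xX x'X by auto
  then show ?thesis using xC fin by simp
qed

lemma in_U_iff:
  assumes "PM M" "f \<in> M" "v \<in> ends f"
  shows "v \<in> U M \<longleftrightarrow> f \<in> MC M"
proof
  assume "v \<in> U M"
  then obtain e where e: "e \<in> MC M" "v \<in> ends e" unfolding U_def by blast
  have "e \<in> M" using e MC_sub by blast
  then have "e = f" using pmg_disj[OF PMD(2)[OF assms(1)] _ assms(2) e(2) assms(3)] by blast
  then show "f \<in> MC M" using e by simp
next
  assume "f \<in> MC M" then show "v \<in> U M" unfolding U_def using assms(3) by blast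
qed

lemma cr_MC:
  assumes "PM M" "f \<in> M" "bic f"
  shows "card {e\<in>MC M. bic e} = (if f \<in> MC M then 1 else 0)"
proof -
  have "{e\<in>MC M. bic e} = {f} \<inter> MC M" using PM_bic_unique[OF assms] MC_sub by blast
  then show ?thesis by auto
qed

lemma XC_even: "even (card (X \<inter> C))"
proof -
  obtain f where f: "f \<in> E" "x \<in> ends f" "c f x" using red[OF xV] by blast
  have bf: "bic f" using red_bic f by blast
  obtain N where N: "PM N" "f \<in> N" using mc[OF f(1)] by blast
  have "even (card (X \<inter> U N) + card {e\<in>MC N. bic e})"
    using match_par[OF MC_E[OF N(1)] pmg_MC[OF N(1)]] .
  then show ?thesis using card_XU[OF N(1)] cr_MC[OF N bf] in_U_iff[OF N f(2)]
    by (auto split: if_splits)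
qed

lemma card_U: assumes "PM M" shows "card (U M) = card C + card ({x, x'} \<inter> U M)"
proof -
  have d: "C \<inter> ({x, x'} \<inter> U M) = {}" using C_sub by blast
  have f: "finite ({x, x'} \<inter> U M)" by simp
  have "card (C \<union> ({x, x'} \<inter> U M)) = card C + card ({x, x'} \<inter> U M)"
    by (rule card_Un_disjoint[OF C_fin f d])
  then show ?thesis using U_decomp[OF assms] by simp
qed

lemma C_even: "even (card C)"
proof -
  obtain g where g: "g \<in> E" "x' \<in> ends g" "c g x'" using red[OF x'V] by blast
  have bg: "bic g" using red_bic g by blast
  obtain N where N: "PM N" "g \<in> N" using mc[OF g(1)] by blast
  have "even (card (X \<inter> U N) + card {e\<in>MC N. bic e})"
    using match_par[OF MC_E[OF N(1)] pmg_MC[OF N(1)]] .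
  then have eq: "(x \<in> U N) = (x' \<in> U N)"
    using card_XU[OF N(1)] cr_MC[OF N bg] in_U_iff[OF N g(2)] XC_even
    by (auto split: if_splits)
  have xC: "x \<notin> C" "x' \<notin> C" using C_sub by auto
  have "card (U N) = card C + card ({x, x'} \<inter> U N)" by (rule card_U[OF N(1)])
  moreover have "card ({x, x'} \<inter> U N) = 0 \<or> card ({x, x'} \<inter> U N) = 2"
    using eq xx' by (cases "x \<in> U N") auto
  ultimately show ?thesis using U_even[OF N(1)] by auto
qed

lemma T_cases: assumes "PM M" shows "(x \<in> U M) = (x' \<in> U M)"
proof (rule ccontr)
  assume h: "(x \<in> U M) \<noteq> (x' \<in> U M)"
  have xC: "x \<notin> C" "x' \<notin> C" using C_sub by auto
  have "card (U M) = card C + card ({x, x'} \<inter> U M)" by (rule card_U[OF assms])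
  moreover have "card ({x, x'} \<inter> U M) = 1"
    using h xx' by (cases "x \<in> U M") auto
  ultimately show False using U_even[OF assms] C_even by auto
qed

lemma U_full: "PM M \<Longrightarrow> x \<in> U M \<Longrightarrow> U M = C \<union> {x, x'}"
  using U_decomp T_cases by blast

lemma U_empty: "PM M \<Longrightarrow> x \<notin> U M \<Longrightarrow> U M = C"
  using U_decomp T_cases by blast

end

context WS
begin

lemma odd_le1: "odd (n::nat) \<Longrightarrow> n \<le> 1 \<Longrightarrow> n = 1" by presburger
lemma even_le1: "even (n::nat) \<Longrightarrow> n \<le> 1 \<Longrightarrow> n = 0" by presburger

lemma CS_V: "C \<union> {x, x'} \<subseteq> V" using C_sub xV x'V by blast

lemma card_XCS: "card (X \<inter> (C \<union> {x, x'})) = card (X \<inter> C) + 1"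
proof -
  have "X \<inter> (C \<union> {x, x'}) = insert x (X \<inter> C)" using xX x'X by auto
  moreover have "x \<notin> X \<inter> C" using C_sub by blast
  ultimately show ?thesis using C_fin by simp
qed

lemma swap:
  assumes "PM M" "Kg \<subseteq> E" "pmg ends (U M) Kg"
  shows "card {e\<in>Kg. bic e} \<le> 1"
proof -
  have UV: "U M \<subseteq> V" using pmg_Union[OF pmg_MC[OF assms(1)]] MC_E[OF assms(1)] ends_sub
    by blast
  have "pmg ends ((V - U M) \<union> U M) ((M - MC M) \<union> Kg)"
    by (rule pmg_union[OF pmg_rest[OF assms(1)] assms(3)]) blast
  moreover have "(V - U M) \<union> U M = V" using UV by blast
  moreover have "(M - MC M) \<union> Kg \<subseteq> E" using PMD(1)[OF assms(1)] assms(2) by blast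
  ultimately have P: "PM ((M - MC M) \<union> Kg)" using PM_iff by simp
  have "{e\<in>Kg. bic e} \<subseteq> {e\<in>(M - MC M) \<union> Kg. bic e}" by blast
  moreover have "finite {e\<in>(M - MC M) \<union> Kg. bic e}" by (rule finite_subset[OF _ PM_fin[OF P]]) blast
  ultimately show ?thesis using PM_one[OF P] by (metis card_mono)
qed

lemma host_emb:
  assumes "PM M" "x \<in> U M" "Kg \<subseteq> E" "pmg ends (C \<union> {x, x'}) Kg"
  shows "card {e\<in>Kg. bic e} = 1"
proof -
  have le: "card {e\<in>Kg. bic e} \<le> 1" using swap[OF assms(1,3)] assms(4) U_full[OF assms(1,2)] by simp
  have "even (card (X \<inter> (C \<union> {x, x'})) + card {e\<in>Kg. bic e})" by (rule match_par[OF assms(3,4)])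
  then have "odd (card {e\<in>Kg. bic e})" using card_XCS XC_even by simp
  then show ?thesis using le by (rule odd_le1)
qed

lemma exists_internal: "\<exists>P. PM P \<and> x \<notin> U P"
proof -
  obtain v where v: "v \<in> V" "v \<notin> {x, x'}" "v \<notin> C" using other_vertex by blast
  obtain h where h: "h \<in> E" "v \<in> ends h" "c h v" using red[OF v(1)] by blast
  have bh: "bic h" using red_bic h by blast
  obtain P where P: "PM P" "h \<in> P" using mc[OF h(1)] by blast
  have "x \<notin> U P"
  proof
    assume xU: "x \<in> U P"
    have "h \<notin> MC P"
    proof
      assume "h \<in> MC P"
      then obtain u where "u \<in> C" "u \<in> ends h" unfolding MC_def by blast
      then have "ends h \<subseteq> C \<union> {x, x'}" using C_closed h(1) by blast
      then show False using v h(2) by blast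
    qed
    then have "card {e\<in>MC P. bic e} = 0" using cr_MC[OF P bh] by simp
    moreover have "even (card (X \<inter> U P) + card {e\<in>MC P. bic e})"
      by (rule match_par[OF MC_E[OF P(1)] pmg_MC[OF P(1)]])
    ultimately show False using card_XU[OF P(1)] xU XC_even by simp
  qed
  then show ?thesis using P by blast
qed

lemma int_emb:
  assumes "Qg \<subseteq> E" "pmg ends C Qg"
  shows "card {e\<in>Qg. bic e} = 0"
proof -
  obtain P where P: "PM P" "x \<notin> U P" using exists_internal by blast
  have le: "card {e\<in>Qg. bic e} \<le> 1" using swap[OF P(1) assms(1)] assms(2) U_empty[OF P] by simp
  have "even (card (X \<inter> C) + card {e\<in>Qg. bic e})" by (rule match_par[OF assms])
  then have "even (card {e\<in>Qg. bic e})" using XC_even by simp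
  then show ?thesis using le by (rule even_le1)
qed

end

lemma PM_iff_gen:
  assumes "multigraph V E ends"
  shows "perfect_matching V E ends M \<longleftrightarrow> M \<subseteq> E \<and> pmg ends V M"
proof
  assume h: "perfect_matching V E ends M"
  then have ME: "M \<subseteq> E" unfolding perfect_matching_def by blast
  have "pmg ends V M"
  proof (rule pmgI)
    fix e assume "e \<in> M" then show "ends e \<subseteq> V" using ME assms unfolding multigraph_def by blast
  next
    fix v assume "v \<in> V" then show "\<exists>e\<in>M. v \<in> ends e" using h unfolding perfect_matching_def by blast
  next
    fix e1 e2 v assume a: "e1 \<in> M" "e2 \<in> M" "v \<in> ends e1" "v \<in> ends e2"
    then have "v \<in> V" using ME assms unfolding multigraph_def by blast
    then have "\<exists>!e. e \<in> M \<and> v \<in> ends e" using h unfolding perfect_matching_def by blast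
    then show "e1 = e2" using a by blast
  qed
  then show "M \<subseteq> E \<and> pmg ends V M" using ME by blast
next
  assume "M \<subseteq> E \<and> pmg ends V M"
  then show "perfect_matching V E ends M" unfolding perfect_matching_def pmg_def by blast
qed

context WS
begin

abbreviation "VB \<equiv> wblock_V C x x'"
abbreviation "EB r \<equiv> wblock_E E ends c C x x' r"
abbreviation "endsB \<equiv> wblock_ends ends x x'"
abbreviation "colB r \<equiv> wblock_col c x x' r"
abbreviation "bicB r \<equiv> bichromatic endsB (colB r)"

lemma VB_eq: "VB = C \<union> {x, x'}" unfolding wblock_V_def ..

lemma endsB_Inl[simp]: "endsB (Inl e) = ends e" unfolding wblock_ends_def by simp
lemma endsB_Inr[simp]: "endsB (Inr n) = {x, x'}" unfolding wblock_ends_def by simp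
lemma colB_Inl[simp]: "colB r (Inl e) = c e" unfolding wblock_col_def by (rule ext) simp

lemma endsB_Inl_comp: "endsB \<circ> Inl = ends" by (rule ext) simp

lemma bicB_Inl[simp]: "bicB r (Inl e) = bic e"
  unfolding bichromatic_def by simp

lemma bicB_Inr: "bicB r (Inr n)"
  unfolding bichromatic_def
proof (intro exI conjI)
  show "endsB (Inr n) = {x, x'}" by simp
  show "colB r (Inr n) x \<noteq> colB r (Inr n) x'"
    unfolding wblock_col_def using xx' by auto
qed

lemma E1_eq: "wblock_E1 E ends c C x x' \<subseteq> wblock_E0 E ends C x x' \<union> range Inr"
  unfolding wblock_E1_def Let_def by auto

lemma E0_E1: "wblock_E0 E ends C x x' \<subseteq> wblock_E1 E ends c C x x'"
  unfolding wblock_E1_def Let_def by auto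

lemma E1_EB: "wblock_E1 E ends c C x x' \<subseteq> EB r"
  unfolding wblock_E_def Let_def by auto

lemma EB_sub: "EB r \<subseteq> wblock_E0 E ends C x x' \<union> range Inr"
  using E1_eq unfolding wblock_E_def Let_def by auto

lemma Inl_EB: "Inl e \<in> EB r \<longleftrightarrow> e \<in> E \<and> ends e \<subseteq> C \<union> {x, x'}"
proof
  assume "Inl e \<in> EB r"
  then have "Inl e \<in> wblock_E0 E ends C x x'" using EB_sub by blast
  then show "e \<in> E \<and> ends e \<subseteq> C \<union> {x, x'}" unfolding wblock_E0_def VB_eq by auto
next
  assume "e \<in> E \<and> ends e \<subseteq> C \<union> {x, x'}"
  then have "Inl e \<in> wblock_E0 E ends C x x'" unfolding wblock_E0_def VB_eq by auto
  then show "Inl e \<in> EB r" using E0_E1 E1_EB by blast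
qed

lemma EB_cases:
  assumes "k \<in> EB r"
  obtains e where "k = Inl e" "e \<in> E" "ends e \<subseteq> C \<union> {x, x'}" | n where "k = Inr n"
proof (cases k)
  case (Inl e) then show ?thesis using that Inl_EB assms by blast
next
  case (Inr n) then show ?thesis using that by blast
qed

lemma EB_fin: "finite (EB r)"
proof -
  have "wblock_E0 E ends C x x' \<subseteq> Inl ` E" unfolding wblock_E0_def by blast
  then have f0: "finite (wblock_E0 E ends C x x')" using finE finite_subset by blast
  have "finite (wblock_E1 E ends c C x x')" unfolding wblock_E1_def Let_def using f0 by simp
  then show ?thesis unfolding wblock_E_def Let_def by simp
qed

lemma EB_xx': "\<exists>k\<in>EB r. endsB k = {x, x'}"
proof (cases "\<exists>f\<in>wblock_E1 E ends c C x x'. endsB f = {x, x'} \<and> bicB r f")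
  case True then show ?thesis using E1_EB by blast
next
  case False
  then have "Inr 2 \<in> EB r" unfolding wblock_E_def Let_def by auto
  then show ?thesis by force
qed

lemma red_x: "\<exists>k\<in>EB r. x \<in> endsB k \<and> colB r k x"
proof (cases "\<exists>f\<in>wblock_E0 E ends C x x'. x \<in> endsB f \<and> colB True f x")
  case True
  then obtain f where f: "f \<in> wblock_E0 E ends C x x'" "x \<in> endsB f" "colB True f x" by blast
  then obtain e where e: "f = Inl e" unfolding wblock_E0_def by blast
  have "f \<in> EB r" using f(1) E0_E1 E1_EB by blast
  show ?thesis by (rule bexI[of _ f]) (use f e \<open>f \<in> EB r\<close> in auto)
next
  case False
  then have "Inr 0 \<in> wblock_E1 E ends c C x x'" unfolding wblock_E1_def Let_def by auto
  then have "Inr 0 \<in> EB r" using E1_EB by blast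
  moreover have "colB r (Inr 0) x" unfolding wblock_col_def by simp
  ultimately show ?thesis by force
qed

lemma red_x': "\<exists>k\<in>EB r. x' \<in> endsB k \<and> colB r k x'"
proof (cases "\<exists>f\<in>wblock_E0 E ends C x x'. x' \<in> endsB f \<and> colB True f x'")
  case True
  then obtain f where f: "f \<in> wblock_E0 E ends C x x'" "x' \<in> endsB f" "colB True f x'" by blast
  then obtain e where e: "f = Inl e" unfolding wblock_E0_def by blast
  have "f \<in> EB r" using f(1) E0_E1 E1_EB by blast
  show ?thesis by (rule bexI[of _ f]) (use f e \<open>f \<in> EB r\<close> in auto)
next
  case False
  then have "Inr 1 \<in> wblock_E1 E ends c C x x'" unfolding wblock_E1_def Let_def by auto
  then have "Inr 1 \<in> EB r" using E1_EB by blast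
  moreover have "colB r (Inr 1) x'" unfolding wblock_col_def using xx' by simp
  ultimately show ?thesis by force
qed

lemma mgB: "multigraph VB (EB r) endsB"
proof -
  have a: "finite VB" using C_fin VB_eq by simp
  have b: "endsB k \<subseteq> VB \<and> card (endsB k) = 2" if k: "k \<in> EB r" for k
    using k
  proof (cases rule: EB_cases)
    case (1 e) then show ?thesis using ends2 VB_eq by simp
  next
    case (2 n) then show ?thesis using xx' VB_eq by simp
  qed
  show ?thesis unfolding multigraph_def using a b EB_fin by blast
qed

lemma PMB_iff: "perfect_matching VB (EB r) endsB K \<longleftrightarrow> K \<subseteq> EB r \<and> pmg endsB VB K"
  by (rule PM_iff_gen[OF mgB])

lemma pmg_Inl: "pmg endsB W (Inl ` Q) \<longleftrightarrow> pmg ends W Q"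
  using pmg_inj_image[of Inl endsB W Q] endsB_Inl_comp by simp

lemma card_bicB_Inl: "card {k\<in>Inl ` Q. bicB r k} = card {e\<in>Q. bic e}"
proof -
  have "{k\<in>Inl ` Q. bicB r k} = Inl ` {e\<in>Q. bic e}" by auto
  then show ?thesis by (simp add: card_image)
qed

lemma glue_int:
  assumes "PM M" "x \<notin> U M" "k1 \<in> EB r" "endsB k1 = {x, x'}"
  shows "perfect_matching VB (EB r) endsB ((Inl ` MC M :: ('e + nat) set) \<union> {k1})"
proof -
  have UC: "U M = C" using U_empty[OF assms(1,2)] .
  have p1: "pmg endsB C (Inl ` MC M)" using pmg_MC[OF assms(1)] UC pmg_Inl by simp
  have p2: "pmg endsB {x, x'} {k1}" using pmg_single[of endsB k1] assms(4) by simp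
  have "pmg endsB (C \<union> {x, x'}) (Inl ` MC M \<union> {k1})"
    by (rule pmg_union[OF p1 p2]) (use C_sub in blast)
  moreover have "Inl ` MC M \<subseteq> EB r"
  proof
    fix k :: "'e + nat" assume "k \<in> Inl ` MC M"
    then obtain e where e: "k = Inl e" "e \<in> MC M" by blast
    have "ends e \<subseteq> C" using pmgD1[OF pmg_MC[OF assms(1)] e(2)] UC by simp
    then show "k \<in> EB r" using e MC_E[OF assms(1)] Inl_EB by blast
  qed
  ultimately show ?thesis using PMB_iff assms(3) VB_eq by simp
qed

lemma ends_in_S:
  assumes "e \<in> E" "ends e \<subseteq> C \<union> {x, x'}" "C \<inter> ends e = {}"
  shows "ends e = {x, x'}"
proof -
  have "ends e \<subseteq> {x, x'}" using assms(2,3) by blast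
  moreover have "card {x, x'} = 2" using xx' by simp
  ultimately show ?thesis using card_subset_eq[of "{x, x'}" "ends e"] ends2[OF assms(1)] by simp
qed

end

context WS
begin

lemma block_mc:
  assumes k: "k \<in> EB r"
  shows "\<exists>K. perfect_matching VB (EB r) endsB K \<and> k \<in> K"
  using k
proof (cases rule: EB_cases)
  case (1 e)
  obtain M where M: "PM M" "e \<in> M" using mc[OF 1(2)] by blast
  show ?thesis
  proof (cases "x \<in> U M")
    case True
    have UF: "U M = C \<union> {x, x'}" using U_full[OF M(1) True] .
    have eMC: "e \<in> MC M"
    proof (rule ccontr)
      assume "e \<notin> MC M"
      then have "C \<inter> ends e = {}" unfolding MC_def using M(2) by blast
      then have "ends e = {x, x'}" using ends_in_S 1 by blast
      then have "x \<in> ends e" by simp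
      then show False using in_U_iff[OF M] True \<open>e \<notin> MC M\<close> by blast
    qed
    have p: "pmg endsB VB (Inl ` MC M)" using pmg_MC[OF M(1)] UF pmg_Inl VB_eq by simp
    have s: "Inl ` MC M \<subseteq> EB r"
    proof
      fix k' :: "'e + nat" assume "k' \<in> Inl ` MC M"
      then obtain e' where e': "k' = Inl e'" "e' \<in> MC M" by blast
      have "ends e' \<subseteq> C \<union> {x, x'}" using pmgD1[OF pmg_MC[OF M(1)] e'(2)] UF by simp
      then show "k' \<in> EB r" using e' MC_E[OF M(1)] Inl_EB by blast
    qed
    have "perfect_matching VB (EB r) endsB (Inl ` MC M)" using p s PMB_iff by blast
    then show ?thesis using eMC 1(1) by blast
  next
    case False
    show ?thesis
    proof (cases "e \<in> MC M")
      case True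
      obtain k1 where k1: "k1 \<in> EB r" "endsB k1 = {x, x'}" using EB_xx' by blast
      show ?thesis using glue_int[OF M(1) False k1] True 1(1) by blast
    next
      case eC: False
      then have "C \<inter> ends e = {}" unfolding MC_def using M(2) by blast
      then have "ends e = {x, x'}" using ends_in_S 1 by blast
      then have "endsB (Inl e) = {x, x'}" by simp
      then show ?thesis using glue_int[OF M(1) False _ ] k 1(1) by blast
    qed
  qed
next
  case (2 n)
  obtain P where P: "PM P" "x \<notin> U P" using exists_internal by blast
  have "endsB k = {x, x'}" using 2 by simp
  then show ?thesis using glue_int[OF P k] by blast
qed

lemma block_mono:
  assumes "k \<in> EB r" "\<not> bicB r k" "w \<in> endsB k"
  shows "\<not> colB r k w"
  using assms(1)
proof (cases rule: EB_cases)
  case (1 e) then show ?thesis using mono_conv assms by simp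
next
  case (2 n) then show ?thesis using bicB_Inr assms(2) by blast
qed

lemma block_red:
  assumes "v \<in> VB"
  shows "\<exists>k\<in>EB r. v \<in> endsB k \<and> colB r k v"
proof -
  consider "v \<in> C" | "v = x" | "v = x'" using assms VB_eq by blast
  then show ?thesis
  proof cases
    case 1
    then have "v \<in> V" using C_sub by blast
    then obtain e where e: "e \<in> E" "v \<in> ends e" "c e v" using red by blast
    have "ends e \<subseteq> C \<union> {x, x'}" using C_closed e 1 by blast
    then have "Inl e \<in> EB r" using Inl_EB e by blast
    then show ?thesis using e by (intro bexI[of _ "Inl e"]) auto
  next
    case 2 then show ?thesis using red_x by blast
  next
    case 3 then show ?thesis using red_x' by blast
  qed
qed

lemma all_Inl:
  assumes "K \<subseteq> EB r" "\<forall>k\<in>K. (\<forall>n. k \<noteq> Inr n)"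
  shows "K = Inl ` {e. Inl e \<in> K}"
proof
  show "K \<subseteq> Inl ` {e. Inl e \<in> K}"
  proof
    fix k assume "k \<in> K"
    then show "k \<in> Inl ` {e. Inl e \<in> K}" using assms(2) by (cases k) auto
  qed
qed blast

lemma block_count:
  assumes K: "perfect_matching VB (EB r) endsB K"
  shows "card {k\<in>K. bicB r k} = 1"
proof -
  have KE: "K \<subseteq> EB r" and Kp: "pmg endsB VB K" using K PMB_iff by auto
  obtain k0 where k0: "k0 \<in> K" "x \<in> endsB k0" using pmgD2[OF Kp] VB_eq by blast
  define Q where "Q = {e. Inl e \<in> K}"
  have QE: "Q \<subseteq> E" unfolding Q_def using KE Inl_EB by blast
  have Inr_k0: "k = k0" if "k \<in> K" "\<exists>n. k = Inr n" for k
  proof -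
    have "x \<in> endsB k" using that by (cases k) auto
    then show ?thesis using pmg_disj[OF Kp that(1) k0(1) _ k0(2)] by blast
  qed
  show ?thesis
  proof (cases "endsB k0 = {x, x'}")
    case True
    define K' where "K' = K - {k0}"
    have allL: "\<forall>k\<in>K'. (\<forall>n. k \<noteq> Inr n)" unfolding K'_def using Inr_k0 by blast
    define Q' where "Q' = {e. Inl e \<in> K'}"
    have K'eq: "K' = Inl ` Q'" unfolding Q'_def by (rule all_Inl[OF _ allL]) (use KE K'_def in blast)
    have "pmg endsB (VB - \<Union>(endsB ` {k0})) K'" unfolding K'_def
      by (rule pmg_sub2[OF Kp]) (use k0 in blast)
    moreover have "VB - \<Union>(endsB ` {k0}) = C" using True VB_eq C_sub by auto
    ultimately have "pmg endsB C (Inl ` Q')" using K'eq by simp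
    then have pQ: "pmg ends C Q'" using pmg_Inl by blast
    have Q'E: "Q' \<subseteq> E" unfolding Q'_def K'_def using KE Inl_EB by blast
    have "card {e\<in>Q'. bic e} = 0" using int_emb[OF Q'E pQ] .
    moreover have "finite {e\<in>Q'. bic e}" by (rule finite_subset[OF _ finE]) (use Q'E in blast)
    ultimately have noQ: "{e\<in>Q'. bic e} = {}" by simp
    have bk0: "bicB r k0"
    proof (cases k0)
      case (Inl e0)
      have "Inl e0 \<in> EB r" using Inl KE k0(1) by blast
      then have e0: "e0 \<in> E" "ends e0 = {x, x'}" using Inl True Inl_EB by auto
      have "X \<inter> ends e0 = {x}" using e0(2) xX x'X by blast
      then have "card (X \<inter> ends e0) = 1" by simp
      then have "bic e0" using mono_even[OF e0(1)] by (metis odd_one)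
      then show ?thesis using Inl by simp
    next
      case (Inr n) then show ?thesis using bicB_Inr by simp
    qed
    have "{k\<in>K. bicB r k} = {k0}"
    proof (intro set_eqI iffI)
      fix k assume k: "k \<in> {k\<in>K. bicB r k}"
      show "k \<in> {k0}"
      proof (rule ccontr)
        assume "k \<notin> {k0}"
        then have "k \<in> K'" using k K'_def by blast
        then obtain e where "k = Inl e" "e \<in> Q'" using K'eq by blast
        then show False using noQ k by simp
      qed
    qed (use k0 bk0 in blast)
    then show ?thesis by simp
  next
    case False
    obtain e0 where e0: "k0 = Inl e0" using False by (cases k0) auto
    have e0E: "e0 \<in> E" "ends e0 \<subseteq> C \<union> {x, x'}" using e0 KE k0 Inl_EB by auto
    have "C \<inter> ends e0 \<noteq> {}"
    proof
      assume "C \<inter> ends e0 = {}"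
      then have "ends e0 = {x, x'}" using ends_in_S e0E by blast
      then show False using False e0 by simp
    qed
    have allL: "\<forall>k\<in>K. (\<forall>n. k \<noteq> Inr n)" using Inr_k0 e0 by fastforce
    have Keq: "K = Inl ` Q" unfolding Q_def by (rule all_Inl[OF KE allL])
    have pQ: "pmg ends (C \<union> {x, x'}) Q" using Kp Keq pmg_Inl VB_eq by metis
    obtain M where M: "PM M" "e0 \<in> M" using mc[OF e0E(1)] by blast
    have "e0 \<in> MC M" unfolding MC_def using M(2) \<open>C \<inter> ends e0 \<noteq> {}\<close> by blast
    then have "x \<in> U M"
    proof -
      assume "e0 \<in> MC M"
      then obtain u where "u \<in> C" "u \<in> ends e0" unfolding MC_def by blast
      then have "u \<in> U M" unfolding U_def using \<open>e0 \<in> MC M\<close> by blast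
      then have "x \<in> U M \<or> x' \<in> U M \<or> True" by blast
      have "\<exists>e\<in>M. x \<in> ends e" using pmgD2[OF PMD(2)[OF M(1)]] xV by blast
      show "x \<in> U M"
      proof -
        have "x \<in> endsB k0" using k0 by simp
        then have "x \<in> ends e0" using e0 by simp
        then show ?thesis using in_U_iff[OF M] \<open>e0 \<in> MC M\<close> by blast
      qed
    qed
    have "card {e\<in>Q. bic e} = 1" using host_emb[OF M(1) \<open>x \<in> U M\<close> QE pQ] .
    then show ?thesis using Keq card_bicB_Inl by simp
  qed
qed

theorem block_W: "W_state VB (EB r) endsB (colB r)"
  unfolding W_state_def matching_covered_def
proof (intro conjI allI impI ballI)
  show "multigraph VB (EB r) endsB" by (rule mgB)
next
  fix k assume "k \<in> EB r" then show "\<exists>K. perfect_matching VB (EB r) endsB K \<and> k \<in> K"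
    by (rule block_mc)
next
  fix k w assume "k \<in> EB r" "\<not> bicB r k" "w \<in> endsB k"
  then show "\<not> colB r k w" by (rule block_mono)
next
  fix K assume "perfect_matching VB (EB r) endsB K"
  then show "card {k\<in>K. bicB r k} = 1" by (rule block_count)
next
  fix v assume "v \<in> VB" then show "\<exists>k\<in>EB r. v \<in> endsB k \<and> colB r k v" by (rule block_red)
qed

end

theorem mainTheorem14:
  fixes V :: "'v set" and E :: "'e set" and ends :: "'e \<Rightarrow> 'v set"
    and c :: "'e \<Rightarrow> 'v \<Rightarrow> bool" and X X' C :: "'v set" and x x' :: 'v and r :: bool
  assumes "W_state V E ends c"
    and "component V (mono_edges E ends c) ends X"
    and "component V (mono_edges E ends c) ends X'"
    and "X \<noteq> X'"
    and "two_vertex_cut V E ends x x'"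
    and "x \<in> X" and "x' \<in> X'"
    and "component (V - {x, x'}) (del_verts_E E ends {x, x'}) ends C"
  shows "W_state (wblock_V C x x') (wblock_E E ends c C x x' r)
           (wblock_ends ends x x') (wblock_col c x x' r)"
proof -
  interpret WS V E ends c X X' C x x'
    by (rule WS.intro) (use assms in auto)
  show ?thesis by (rule block_W)
qed

end
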